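(* Let $k,n\in\mathbb{N}$ with $2n\ge k$. For $i\in\mathbb{N}$ put $x_i=\frac{1+(-1)^{i}}{2}\cdot\frac{[(i-1)!!]^2}{i+1}$ (so $(x_1,x_2,x_3,x_4,x_5,x_6,\dots)=(0,\tfrac13,0,\tfrac95,0,\tfrac{225}{7},\dots)$). Then \[ \mathrm{B}_{2n,k}\bigl(x_1,x_2,\dots,x_{2n-k+1}\bigr)=(-1)^{n+k}\frac{(4n)!!}{(2n+k)!}\sum_{q=1}^{k}(-1)^{q}\binom{2n+k}{k-q}\,Q(q,2n;2). \]
   Context: Partial Bell polynomials: for $n\ge k\ge0$, \[ \mathrm{B}_{n,k}(x_1,\dots,x_{n-k+1})=\sum\frac{n!}{\prod_{i=1}^{n-k+1}\ell_i!}\prod_{i=1}^{n-k+1}\left(\frac{x_i}{i!}\right)^{\ell_i}, \] the sum over all $(\ell_1,\dots,\ell_{n-k+1})\in\mathbb{N}_0^{n-k+1}$ with $\sum_i i\ell_i=n$ and $\sum_i\ell_i=k$. Double factorials: $(2p)!!=2^p p!$, $(2p-1)!!=1\cdot3\cdots(2p-1)$, $0!!=(-1)!!=1$. $s(n,k)$ denotes the signed Stirling numbers of the first kind, defined by $\frac{[\ln(1+x)]^k}{k!}=\sum_{n=k}^\infty s(n,k)\frac{x^n}{n!}$ for $|x|<1$; equivalently $\prod_{j=0}^{n-1}(z-j)=\sum_{k=0}^n s(n,k)z^k$. For $m\in\mathbb{N}$, $k\in\mathbb{N}_0$ and $\alpha\in\mathbb{R}$ define \[ Q(m,k;\alpha)=\sum_{\ell=0}^{k}\binom{m+\ell-1}{m-1}\,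 s(m+k-1,m+\ell-1)\left(\frac{m+k-\alpha}{2}\right)^{\ell}, \] with the convention $0^0=1$. *)

theory Defs
  imports "HOL-Analysis.Analysis" "HOL-Combinatorics.Stirling"
begin

fun dfact :: "nat \<Rightarrow> nat" where
  "dfact 0 = 1"
| "dfact (Suc 0) = 1"
| "dfact (Suc (Suc n)) = Suc (Suc n) * dfact n"

definition stirling_s :: "nat \<Rightarrow> nat \<Rightarrow> int" where
  "stirling_s n k = (-1) ^ (n - k) * int (stirling n k)"

text \<open>Partial Bell polynomial B_{n,k}(x_1,...,x_{n-k+1}); the multi-indices
  (l_1,...,l_{n-k+1}) range over natural numbers (necessarily at most n).\<close>
definition bell_partial :: "nat \<Rightarrow> nat \<Rightarrow> (nat \<Rightarrow> real) \<Rightarrow> real" where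
  "bell_partial n k x =
     (\<Sum>l \<in> {l \<in> PiE {1..n-k+1} (\<lambda>_. {..n}).
               (\<Sum>i=1..n-k+1. i * l i) = n \<and> (\<Sum>i=1..n-k+1. l i) = k}.
        fact n / (\<Prod>i=1..n-k+1. fact (l i))
        * (\<Prod>i=1..n-k+1. (x i / fact i) ^ (l i)))"

definition Qfun :: "nat \<Rightarrow> nat \<Rightarrow> real \<Rightarrow> real" where
  "Qfun m k \<alpha> =
     (\<Sum>l=0..k. real ((m + l - 1) choose (m - 1))
        * real_of_int (stirling_s (m + k - 1) (m + l - 1))
        * ((real (m + k) - \<alpha>) / 2) ^ l)"

end

theory Submission
  imports Defs "HOL-Computational_Algebra.Polynomial" "HOL-Computational_Algebra.Formal_Power_Series"
begin

unbundle no vec_syntax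
unbundle fps_syntax


fun RR :: "nat \<Rightarrow> real poly" where
  "RR 0 = 1"
| "RR (Suc 0) = [:0, 1:]"
| "RR (Suc (Suc M)) = RR M * [:-((real M + 1)^2 / 4), 0, 1:]"

lemma mult_quad: "coeff ((p::real poly) * [:a, 0, 1:]) i = a * coeff p i + (if i \<ge> 2 then coeff p (i - 2) else 0)"
proof -
  have e: "p * [:a, 0, 1:] = smult a p + pCons 0 (pCons 0 p)"
    by (simp add: mult_pCons_right smult_1_left)
  consider "i = 0" | "i = 1" | j where "i = Suc (Suc j)" by (metis not0_implies_Suc One_nat_def)
  then show ?thesis by cases (simp_all add: e)
qed

lemma RR_rec0: "coeff (RR (Suc (Suc M))) 0 = -((real M + 1)^2 / 4) * coeff (RR M) 0"
  by (simp add: mult_quad)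
lemma RR_rec1: "coeff (RR (Suc (Suc M))) 1 = -((real M + 1)^2 / 4) * coeff (RR M) 1"
  by (simp add: mult_quad)
lemma RR_rec2: "coeff (RR (Suc (Suc M))) (i+2) = coeff (RR M) i - ((real M + 1)^2 / 4) * coeff (RR M) (i+2)"
  by (simp add: mult_quad)

lemma RR_high: "i > M \<Longrightarrow> coeff (RR M) i = 0"
proof (induction M arbitrary: i rule: RR.induct)
  case 1 then show ?case by (simp add: coeff_1)
next
  case 2
  then have "i = Suc (Suc (i - 2))" by simp
  then have "coeff [:0, 1::real:] i = coeff [:0, 1::real:] (Suc (Suc (i - 2)))" by (rule arg_cong)
  also have "\<dots> = 0" by simp
  finally show ?case by simp
next
  case (3 M)
  then have i: "i = (i - 2) + 2" and i2: "i - 2 > M" by auto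
  have "coeff (RR (Suc (Suc M))) i = coeff (RR (Suc (Suc M))) ((i - 2) + 2)" using i by (rule arg_cong)
  also have "\<dots> = 0" using RR_rec2[of M "i - 2"] 3(1)[OF i2] 3(1)[of "i - 2 + 2"] i2 by simp
  finally show ?case .
qed

lemma RR_top: "coeff (RR M) M = 1"
proof (induction M rule: RR.induct)
  case 1 then show ?case by simp
next
  case 2 then show ?case by simp
next
  case (3 M)
  then show ?case using RR_rec2[of M M] RR_high[of M "M+2"] by simp
qed

lemma RR_poly: "poly (RR M) y = (\<Prod>j<M. y + (real M - 1) / 2 - real j)"
proof (induction M rule: RR.induct)
  case 1 then show ?case by simp
next
  case 2 then show ?case by simp
next
  case (3 M)
  have "(\<Prod>j<Suc (Suc M). y + (real (Suc (Suc M)) - 1) / 2 - real j)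
     = (y + (real (Suc (Suc M)) - 1) / 2 - real 0) * (\<Prod>j<Suc M. y + (real (Suc (Suc M)) - 1) / 2 - real (Suc j))"
    by (rule prod.lessThan_Suc_shift)
  also have "(\<Prod>j<Suc M. y + (real (Suc (Suc M)) - 1) / 2 - real (Suc j))
     = (\<Prod>j<M. y + (real (Suc (Suc M)) - 1) / 2 - real (Suc j)) * (y + (real (Suc (Suc M)) - 1) / 2 - real (Suc M))"
    by (rule prod.lessThan_Suc)
  also have "(\<Prod>j<M. y + (real (Suc (Suc M)) - 1) / 2 - real (Suc j)) = (\<Prod>j<M. y + (real M - 1) / 2 - real j)"
    by (rule prod.cong) (simp_all add: field_simps)
  finally have e: "(\<Prod>j<Suc (Suc M). y + (real (Suc (Suc M)) - 1) / 2 - real j) =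
     (y + (real M + 1) / 2) * ((\<Prod>j<M. y + (real M - 1) / 2 - real j) * (y - (real M + 1) / 2))"
    by (simp add: field_simps)
  have r: "poly (RR (Suc (Suc M))) y = poly (RR M) y * (y^2 - ((real M + 1)/2)^2)"
    by (simp add: algebra_simps power2_eq_square)
  have aux: "\<And>a P::real. (y + a) * (P * (y - a)) = P * (y^2 - a^2)"
    by (simp add: power2_eq_square algebra_simps)
  show ?case unfolding e r 3 aux ..
qed

lemma falling_stirling: "(\<Prod>j<M. w - real j) = (\<Sum>k\<le>M. real_of_int (stirling_s M k) * w ^ k)"
proof -
  have "(\<Prod>j<M. w - real j) = (-1)^M * (\<Prod>j<M. (-w + real j))"
    by (induction M) (simp_all add: algebra_simps)
  also have "\<dots> = (-1)^M * pochhammer (-w) M" by (simp add: pochhammer_prod atLeast0LessThan)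
  also have "\<dots> = (-1)^M * (\<Sum>k\<le>M. real (stirling M k) * (-w) ^ k)" by (simp add: stirling_pochhammer)
  also have "\<dots> = (\<Sum>k\<le>M. real_of_int (stirling_s M k) * w ^ k)"
    unfolding sum_distrib_left
  proof (rule sum.cong)
    fix k assume "k \<in> {..M}"
    then have "(-1::real)^M = (-1)^(M-k) * (-1)^k" by (simp add: power_add[symmetric])
    then show "(-1)^M * (real (stirling M k) * (-w) ^ k) = real_of_int (stirling_s M k) * w ^ k"
      by (simp add: stirling_s_def power_minus' algebra_simps)
  qed simp
  finally show ?thesis .
qed



definition gco :: "nat \<Rightarrow> nat \<Rightarrow> real" where
  "gco M i = (\<Sum>k\<le>M. real_of_int (stirling_s M k) * real (k choose i) * ((real M - 1)/2)^(k - i))"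

lemma RR_eq: "RR M = (\<Sum>i\<le>M. monom (gco M i) i)"
proof (rule poly_eq_poly_eq_iff[THEN iffD1], rule ext)
  fix y :: real
  define c where "c = (real M - 1) / 2"
  have "poly (RR M) y = (\<Prod>j<M. (y + c) - real j)" unfolding RR_poly c_def by (simp add: algebra_simps)
  also have "\<dots> = (\<Sum>k\<le>M. real_of_int (stirling_s M k) * (y + c) ^ k)" by (rule falling_stirling)
  also have "\<dots> = (\<Sum>k\<le>M. real_of_int (stirling_s M k) * (\<Sum>i\<le>M. real (k choose i) * y ^ i * c ^ (k - i)))"
  proof (rule sum.cong)
    fix k assume k: "k \<in> {..M}"
    have "(y + c) ^ k = (\<Sum>i\<le>k. real (k choose i) * y ^ i * c ^ (k - i))" by (rule binomial_ring)
    also have "\<dots> = (\<Sum>i\<le>M. real (k choose i) * y ^ i * c ^ (k - i))"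
      using k by (intro sum.mono_neutral_left) auto
    finally show "real_of_int (stirling_s M k) * (y + c) ^ k = real_of_int (stirling_s M k) * (\<Sum>i\<le>M. real (k choose i) * y ^ i * c ^ (k - i))" by simp
  qed simp
  also have "\<dots> = (\<Sum>i\<le>M. gco M i * y ^ i)"
    unfolding gco_def c_def[symmetric] sum_distrib_left sum_distrib_right
    by (subst sum.swap) (simp add: algebra_simps)
  also have "\<dots> = poly (\<Sum>i\<le>M. monom (gco M i) i) y"
    by (simp add: poly_sum poly_monom)
  finally show "poly (RR M) y = poly (\<Sum>i\<le>M. monom (gco M i) i) y" .
qed

lemma coeff_RR: "i \<le> M \<Longrightarrow> coeff (RR M) i = gco M i"
  unfolding RR_eq by (simp add: coeff_sum coeff_monom)

lemma Qfun_RR: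
  assumes "q \<ge> 1"
  shows "Qfun q (2 * n) 2 = coeff (RR (q + 2 * n - 1)) (q - 1)"
proof -
  define M where "M = q + 2 * n - 1"
  have cM: "(real (q + 2 * n) - 2) / 2 = (real M - 1) / 2" using assms unfolding M_def by (simp add: of_nat_diff)
  define f where "f k = real_of_int (stirling_s M k) * real (k choose (q - 1)) * ((real M - 1)/2)^(k - (q - 1))" for k
  have "coeff (RR M) (q - 1) = (\<Sum>k\<le>M. f k)" unfolding M_def f_def using assms by (simp add: coeff_RR gco_def)
  also have "\<dots> = (\<Sum>k\<in>{q - 1..M}. f k)"
    by (rule sum.mono_neutral_right) (auto simp: f_def)
  also have "\<dots> = (\<Sum>l\<in>{0..2*n}. f (l + (q - 1)))"
  proof -
    have "{q - 1..M} = {0 + (q - 1)..2 * n + (q - 1)}" unfolding M_def using assms by auto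
    then show ?thesis using sum.shift_bounds_cl_nat_ivl[of f 0 "q - 1" "2 * n"] by simp
  qed
  also have "\<dots> = Qfun q (2 * n) 2"
    unfolding Qfun_def cM
  proof (rule sum.cong)
    fix l assume "l \<in> {0..2*n}"
    have e1: "l + (q - 1) = q + l - 1" "q + l - 1 - (q - 1) = l" using assms by auto
    show "f (l + (q - 1)) = real (q + l - 1 choose (q - 1)) * real_of_int (stirling_s (q + 2 * n - 1) (q + l - 1)) * ((real M - 1) / 2) ^ l"
      unfolding f_def e1(1) e1(2) M_def by simp
  qed simp
  finally show ?thesis unfolding M_def by simp
qed



lemma dfact_odd: "dfact (2 * n + 1) = (2 * n + 1) * dfact (2 * n - 1)"
proof (cases n)
  case 0 then show ?thesis by simp
next
  case (Suc m)
  then have "2 * n + 1 = Suc (Suc (2 * m + 1))" "2 * n - 1 = 2 * m + 1" by auto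
  then show ?thesis by simp
qed

lemma dfact_even: "dfact (2 * n) = 2 ^ n * fact n"
proof (induction n)
  case 0 then show ?case by simp
next
  case (Suc n)
  have "dfact (2 * Suc n) = dfact (Suc (Suc (2 * n)))" by simp
  also have "\<dots> = (2 * n + 2) * dfact (2 * n)" by simp
  also have "\<dots> = 2 ^ Suc n * fact (Suc n)" unfolding Suc by (simp add: algebra_simps)
  finally show ?case .
qed

definition yy :: "nat \<Rightarrow> real" where
  "yy j = (if odd j then (real (dfact (j - 2)))^2 else 0)"

definition YY :: "real fps" where "YY = Abs_fps (\<lambda>j. yy j / fact j)"
definition WW :: "real fps" where "WW = fps_deriv YY"

lemma yy_rec: "yy (j + 3) = (real j + 1)^2 * yy (j + 1)"
proof (cases "even j")
  case True
  then obtain p where p: "j = 2 * p" by blast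
  have "dfact (j + 3 - 2) = dfact (2 * p + 1)" using p by simp
  also have "\<dots> = (2 * p + 1) * dfact (2 * p - 1)" by (rule dfact_odd)
  finally have "dfact (j + 3 - 2) = (j + 1) * dfact (j + 1 - 2)" using p by simp
  then have "real (dfact (j + 3 - 2)) = (real j + 1) * real (dfact (j + 1 - 2))" by (simp add: algebra_simps)
  then show ?thesis using True unfolding yy_def by (simp add: power_mult_distrib)
next
  case False then show ?thesis unfolding yy_def by simp
qed

lemma YY_nth: "YY $ j = yy j / fact j" by (simp add: YY_def)
lemma WW_nth: "WW $ j = yy (j + 1) / fact j"
  by (simp add: WW_def YY_nth fact_Suc del: of_nat_Suc)

lemma yy1: "yy 1 = 1" by (simp add: yy_def)
lemma yy_even: "even j \<Longrightarrow> yy j = 0" by (simp add: yy_def)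

lemma WW_ode: "(1 - fps_X^2) * fps_deriv WW = fps_X * WW"
proof (rule fps_ext)
  fix j
  have G: "fps_deriv WW $ n = yy (n + 2) / fact n" for n
    by (simp add: WW_nth fact_Suc del: of_nat_Suc) 
  have L: "((1 - fps_X^2) * fps_deriv WW) $ j = fps_deriv WW $ j - (if j < 2 then 0 else fps_deriv WW $ (j - 2))"
  proof -
    have "(1 - fps_X^2) * fps_deriv WW = fps_deriv WW - fps_X^2 * fps_deriv WW" by (simp add: algebra_simps)
    then show ?thesis by (simp add: fps_X_power_mult_nth)
  qed
  consider "j = 0" | "j = 1" | j' where "j = j' + 2" by (metis add_2_eq_Suc' not0_implies_Suc One_nat_def)
  then show "((1 - fps_X^2) * fps_deriv WW) $ j = (fps_X * WW) $ j"
  proof cases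
    case 1 then show ?thesis unfolding L G by (simp add: yy_even)
  next
    have y3: "yy (Suc (Suc (Suc 0))) = 1" by (simp add: yy_def)
    case 2 then show ?thesis unfolding L G by (simp add: WW_nth yy_def y3)
  next
    case 3
    have r: "yy (Suc (Suc (Suc (Suc j')))) = (real j' + 2)^2 * yy (Suc (Suc j'))"
      using yy_rec[of "Suc j'"] by (simp add: numeral_eq_Suc add.commute)
    have "fps_deriv WW $ j - fps_deriv WW $ j' = WW $ (j' + 1)"
      unfolding G WW_nth 3
      by (simp add: r fact_Suc numeral_eq_Suc field_simps del: of_nat_Suc) (simp add: algebra_simps power2_eq_square)
    moreover have "((1 - fps_X^2) * fps_deriv WW) $ j = fps_deriv WW $ j - fps_deriv WW $ j'"
      by (subst L) (simp add: 3)
    ultimately show ?thesis using 3 by simp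
  qed
qed



lemma YY0: "YY $ 0 = 0" by (simp add: YY_nth yy_def)
lemma YY1: "YY $ 1 = 1" by (simp add: YY_nth yy_def)
lemma WW0: "WW $ 0 = 1" by (simp add: WW_nth yy_def)

lemma V_one: "(1 - fps_X^2) * WW^2 = 1"
proof -
  let ?V = "(1 - fps_X^2) * WW^2"
  have "fps_deriv ?V = - (2 * fps_X) * WW^2 + 2 * WW * ((1 - fps_X^2) * fps_deriv WW)"
    by (simp add: fps_deriv_power algebra_simps power2_eq_square)
  also have "\<dots> = 0" unfolding WW_ode by (simp add: algebra_simps power2_eq_square)
  finally have "fps_deriv ?V = 0" .
  then have "?V = fps_const (?V $ 0)" by (rule fps_deriv_eq_0_iff[THEN iffD1])
  also have "?V $ 0 = 1" by (simp add: WW0 power2_eq_square fps_X_power_mult_nth algebra_simps)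
  finally show ?thesis by simp
qed

lemma pow_ode:
  "(1 - fps_X^2) * fps_deriv (fps_deriv (YY^(q+2))) - fps_X * fps_deriv (YY^(q+2))
    = of_nat ((q+2)*(q+1)) * YY^q"
proof -
  have d1: "fps_deriv (YY^(q+2)) = of_nat (q+2) * WW * YY^(q+1)"
    by (subst fps_deriv_power') (simp add: WW_def del: power_Suc)
  have d2: "fps_deriv (YY^(q+1)) = of_nat (q+1) * WW * YY^q"
    by (subst fps_deriv_power') (simp add: WW_def del: power_Suc)
  have "fps_deriv (fps_deriv (YY^(q+2))) = of_nat (q+2) * (fps_deriv WW * YY^(q+1) + WW * fps_deriv (YY^(q+1)))"
    unfolding d1 by (simp add: algebra_simps del: power_Suc)
  also have "\<dots> = of_nat (q+2) * (fps_deriv WW * YY^(q+1) + of_nat (q+1) * WW^2 * YY^q)"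
    unfolding d2 by (simp add: algebra_simps power2_eq_square del: power_Suc)
  finally have d3: "fps_deriv (fps_deriv (YY^(q+2))) = \<dots>" .
  have "(1 - fps_X^2) * fps_deriv (fps_deriv (YY^(q+2)))
     = of_nat (q+2) * (((1 - fps_X^2) * fps_deriv WW) * YY^(q+1) + of_nat (q+1) * ((1 - fps_X^2) * WW^2) * YY^q)"
    unfolding d3 by (simp add: algebra_simps del: power_Suc)
  also have "\<dots> = of_nat (q+2) * (fps_X * WW * YY^(q+1) + of_nat (q+1) * YY^q)"
    unfolding WW_ode V_one by (simp del: power_Suc)
  finally have d4: "(1 - fps_X^2) * fps_deriv (fps_deriv (YY^(q+2))) = of_nat (q+2) * (fps_X * WW * YY^(q+1) + of_nat (q+1) * YY^q)" .
  show ?thesis by (subst d4, subst d1) (simp add: algebra_simps del: power_Suc)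
qed

lemma coeff_rec:
  "(real j + 1) * (real j + 2) * (YY^(q+2)) $ (j+2)
     = (real j)^2 * (YY^(q+2)) $ j + (real q + 1) * (real q + 2) * (YY^q) $ j"
proof -
  let ?F = "YY^(q+2)"
  have "((1 - fps_X^2) * fps_deriv (fps_deriv ?F) - fps_X * fps_deriv ?F) $ j = (of_nat ((q+2)*(q+1)) * YY^q) $ j"
    by (simp only: pow_ode)
  moreover have "(1 - fps_X^2) * fps_deriv (fps_deriv ?F) = fps_deriv (fps_deriv ?F) - fps_X^2 * fps_deriv (fps_deriv ?F)"
    by (simp add: algebra_simps)
  ultimately have e: "fps_deriv (fps_deriv ?F) $ j - (if j < 2 then 0 else fps_deriv (fps_deriv ?F) $ (j - 2))
      - (if j = 0 then 0 else fps_deriv ?F $ (j - 1)) = real ((q+2)*(q+1)) * (YY^q) $ j"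
    by (simp only: fps_sub_nth fps_X_power_mult_nth fps_X_mult_nth fps_of_nat[symmetric] fps_mult_left_const_nth)
  have t: "(if j < 2 then 0 else fps_deriv (fps_deriv ?F) $ (j - 2)) = (real j - 1) * real j * ?F $ j"
  proof (cases "j < 2")
    case True then have "j = 0 \<or> j = 1" by auto
    then show ?thesis using True by auto
  next
    case False
    then have "j - 2 + 1 = j - 1" "j - 1 + 1 = j" by auto
    then show ?thesis using False by (simp add: of_nat_diff del: power_Suc)
  qed
  have u: "(if j = 0 then 0 else fps_deriv ?F $ (j - 1)) = real j * ?F $ j"
    by (cases j) (auto simp del: power_Suc)
  have "fps_deriv (fps_deriv ?F) $ j = (real j + 1) * (real j + 2) * ?F $ (j + 2)"
    by (simp add: algebra_simps del: power_Suc)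
  then show ?thesis using e unfolding t u by (simp add: algebra_simps power2_eq_square del: power_Suc)
qed



definition cc :: "nat \<Rightarrow> nat \<Rightarrow> real" where
  "cc j q = fact j / fact q * (YY^q $ j)"

lemma cc_rec: "cc (j+2) (q+2) = (real j)^2 * cc j (q+2) + cc j q"
proof -
  have fj: "fact (j+2) = (real j + 1) * (real j + 2) * fact j"
    by (simp add: fact_Suc numeral_eq_Suc algebra_simps)
  have fq: "fact (q+2) = (real q + 1) * (real q + 2) * fact q"
    by (simp add: fact_Suc numeral_eq_Suc algebra_simps)
  have "cc (j+2) (q+2) = fact j / fact (q+2) * ((real j + 1) * (real j + 2) * (YY^(q+2)) $ (j+2))"
    unfolding cc_def fj by (simp only: mult_ac divide_inverse)
  also have "\<dots> = fact j / fact (q+2) * ((real j)^2 * (YY^(q+2)) $ j + (real q + 1) * (real q + 2) * (YY^q) $ j)"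
    unfolding coeff_rec ..
  also have "\<dots> = (real j)^2 * cc j (q+2) + cc j q"
  proof -
    have h: "\<And>x a b g::real. a \<noteq> 0 \<Longrightarrow> b \<noteq> 0 \<Longrightarrow> x / (b * a) * (b * g) = x / a * g" by simp
    have "fact j / fact (q+2) * ((real q + 1) * (real q + 2) * (YY^q) $ j) = cc j q"
      unfolding cc_def fq by (rule h) auto
    moreover have "fact j / fact (q+2) * ((real j)^2 * (YY^(q+2)) $ j) = (real j)^2 * cc j (q+2)"
      unfolding cc_def by (simp only: mult_ac)
    ultimately show ?thesis by (simp only: distrib_left)
  qed
  finally show ?thesis .
qed

lemma cc_low: "j < q \<Longrightarrow> cc j q = 0"
  unfolding cc_def using startsby_zero_power_prefix[OF YY0] by simp

lemma cc_same: "cc q q = 1"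
  unfolding cc_def using startsby_zero_power_nth_same[OF YY0] by (simp add: YY_nth yy_def)

lemma cc_one: "cc (2*n+1) 1 = (real (dfact (2*n - 1)))^2"
  unfolding cc_def by (simp add: YY_nth yy_def)

lemma cc_zero: "n \<ge> 1 \<Longrightarrow> cc (2*n) 0 = 0"
  unfolding cc_def by simp

lemma RR_zero: "(-4)^n * coeff (RR (2*n)) 0 = (real (dfact (2*n - 1)))^2"
proof (induction n)
  case 0 then show ?case by simp
next
  case (Suc n)
  have "coeff (RR (2 * Suc n)) 0 = -((real (2*n) + 1)^2 / 4) * coeff (RR (2*n)) 0"
    using RR_rec0[of "2*n"] by simp
  then have "(-4)^(Suc n) * coeff (RR (2 * Suc n)) 0 = (real (2*n) + 1)^2 * ((-4)^n * coeff (RR (2*n)) 0)"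
    by (simp add: algebra_simps)
  moreover have "real (dfact (2 * Suc n - 1)) = (real (2*n) + 1) * real (dfact (2*n - 1))"
    using dfact_odd[of n] by (simp add: algebra_simps)
  ultimately show ?case using Suc by (simp only: power_mult_distrib)
qed

lemma main_cc: "q \<ge> 1 \<Longrightarrow> cc (2*n+q) q = (-4)^n * coeff (RR (2*n+q-1)) (q-1)"
proof (induction n arbitrary: q)
  case 0
  then show ?case by (simp add: cc_same RR_top)
next
  case (Suc n)
  show ?case using Suc.prems
  proof (induction q rule: less_induct)
    case (less q)
    consider "q = 1" | "q = 2" | q' where "q = q' + 2" "q' \<ge> 1"
      using less.prems by (metis add_2_eq_Suc' le_Suc_eq Suc_eq_plus1 nat_le_iff_add One_nat_def add.commute)
    then show ?case
    proof cases
      case 1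
      then show ?thesis using cc_one[of "Suc n"] RR_zero[of "Suc n"] by simp
    next
      case 2
      have "cc (2 * Suc n + 2) 2 = (real (2*n+2))^2 * cc (2*n+2) 2 + cc (2*n+2) 0"
        using cc_rec[of "2*n+2" 0] by (simp add: eval_nat_numeral)
      also have "cc (2*n+2) 0 = 0" using cc_zero[of "Suc n"] by simp
      also have "cc (2*n+2) 2 = (-4)^n * coeff (RR (2*n+1)) 1"
        using Suc.IH[of 2] by simp
      finally have a: "cc (2 * Suc n + 2) 2 = (real (2*n+2))^2 * ((-4)^n * coeff (RR (2*n+1)) 1)" by simp
      have b: "coeff (RR (2 * Suc n + 2 - 1)) (2 - 1) = -((real (2*n+1) + 1)^2 / 4) * coeff (RR (2*n+1)) 1"
        using RR_rec1[of "2*n+1"] by (simp add: numeral_eq_Suc)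
      show ?thesis unfolding 2 a b by (simp add: field_simps power2_eq_square)
    next
      case 3
      have "cc (2 * Suc n + q) q = cc ((2*n+q'+2) + 2) (q'+2)" using 3 by (simp add: algebra_simps)
      also have "\<dots> = (real (2*n+q'+2))^2 * cc (2*n+q'+2) (q'+2) + cc (2*n+q'+2) q'"
        by (rule cc_rec)
      also have "cc (2*n+q'+2) (q'+2) = (-4)^n * coeff (RR (2*n+q'+1)) (q'+1)"
        using Suc.IH[of "q'+2"] by (simp add: algebra_simps)
      also have "cc (2*n+q'+2) q' = (-4)^(Suc n) * coeff (RR (2*n+q'+1)) (q'-1)"
        using less.IH[of q'] 3 by (simp add: algebra_simps)
      finally have a: "cc (2 * Suc n + q) q = (real (2*n+q'+2))^2 * ((-4)^n * coeff (RR (2*n+q'+1)) (q'+1))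
          + (-4)^(Suc n) * coeff (RR (2*n+q'+1)) (q'-1)" .
      have e: "2 * Suc n + q - 1 = Suc (Suc (2*n+q'+1))" "q - 1 = (q' - 1) + 2" using 3 by auto
      have b: "coeff (RR (2 * Suc n + q - 1)) (q - 1) = coeff (RR (2*n+q'+1)) (q'-1) - ((real (2*n+q'+1) + 1)^2/4) * coeff (RR (2*n+q'+1)) (q'+1)"
        unfolding e using RR_rec2[of "2*n+q'+1" "q'-1"] 3 by simp
      show ?thesis unfolding a b by (simp add: field_simps power2_eq_square)
    qed
  qed
qed



definition LL :: "nat set \<Rightarrow> nat \<Rightarrow> (nat \<Rightarrow> nat) set" where
  "LL I k = {l \<in> PiE I (\<lambda>_. {..k}). sum l I = k}"

lemma finite_LL: "finite I \<Longrightarrow> finite (LL I k)"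
proof -
  assume I: "finite I"
  have "LL I k \<subseteq> PiE I (\<lambda>_. {..k})" unfolding LL_def by blast
  moreover have "finite (PiE I (\<lambda>_. {..k}))" using I by (rule finite_PiE) simp
  ultimately show ?thesis by (rule finite_subset)
qed

lemma multinomial_fps:
  fixes a :: "nat \<Rightarrow> real fps"
  assumes "finite I"
  shows "(\<Sum>i\<in>I. a i)^k = (\<Sum>l\<in>LL I k. fps_const (fact k / (\<Prod>i\<in>I. fact (l i))) * (\<Prod>i\<in>I. a i ^ l i))"
  using assms
proof (induction I arbitrary: k rule: finite_induct)
  case empty
  show ?case
  proof (cases k)
    case 0
    then have "LL {} k = {\<lambda>_. undefined}" unfolding LL_def by auto
    then show ?thesis using 0 by simp
  next
    case (Suc k')
    then have "LL {} k = {}" unfolding LL_def by auto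
    then show ?thesis using Suc by simp
  qed
next
  case (insert m I)
  define S where "S = (\<Sum>i\<in>I. a i)"
  have "(\<Sum>i\<in>insert m I. a i)^k = (a m + S)^k" using insert by (simp add: S_def)
  also have "\<dots> = (\<Sum>p\<le>k. of_nat (k choose p) * a m ^ p * S ^ (k - p))" by (rule binomial_ring)
  also have "\<dots> = (\<Sum>p\<le>k. \<Sum>l\<in>LL I (k - p). of_nat (k choose p) * a m ^ p *
       (fps_const (fact (k - p) / (\<Prod>i\<in>I. fact (l i))) * (\<Prod>i\<in>I. a i ^ l i)))"
    unfolding S_def insert.IH by (simp add: sum_distrib_left)
  also have "\<dots> = (\<Sum>(p, l)\<in>Sigma {..k} (\<lambda>p. LL I (k - p)). of_nat (k choose p) * a m ^ p *
       (fps_const (fact (k - p) / (\<Prod>i\<in>I. fact (l i))) * (\<Prod>i\<in>I. a i ^ l i)))"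
    by (rule sum.Sigma) (auto simp: finite_LL insert.hyps)
  also have "\<dots> = (\<Sum>l\<in>LL (insert m I) k. fps_const (fact k / (\<Prod>i\<in>insert m I. fact (l i))) * (\<Prod>i\<in>insert m I. a i ^ l i))"
  proof (rule sum.reindex_bij_witness[where i = "\<lambda>l. (l m, l(m := undefined))" and j = "\<lambda>(p, l). l(m := p)"])
    fix b assume b: "b \<in> Sigma {..k} (\<lambda>p. LL I (k - p))"
    obtain p l where bpl: "b = (p, l)" by force
    with b have p: "p \<le> k" and l: "l \<in> PiE I (\<lambda>_. {..k - p})" "sum l I = k - p" unfolding LL_def by auto
    have lm: "l m = undefined" using l(1) insert.hyps(2) by (auto simp: PiE_def extensional_def)
    show "(\<lambda>l. (l m, l(m := undefined))) ((\<lambda>(p, l). l(m := p)) b) = b"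
      using lm bpl by (auto simp: fun_upd_idem)
    have s0: "sum (l(m := p)) I = sum l I" using insert.hyps(2) by (intro sum.cong) auto
    have s: "sum (l(m := p)) (insert m I) = k"
      using insert.hyps p l(2) s0 by simp
    have "l(m := p) \<in> PiE (insert m I) (\<lambda>_. {..k})"
      using l(1) p by (auto simp: PiE_def Pi_def extensional_def)
    then show "(\<lambda>(p, l). l(m := p)) b \<in> LL (insert m I) k" using s bpl unfolding LL_def by auto
    have pr1: "(\<Prod>i\<in>insert m I. fact ((l(m:=p)) i) :: real) = fact p * (\<Prod>i\<in>I. fact (l i))"
    proof -
      have "(\<Prod>i\<in>I. fact ((l(m:=p)) i) :: real) = (\<Prod>i\<in>I. fact (l i))" using insert.hyps(2) by (intro prod.cong) auto
      then show ?thesis using insert.hyps by simp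
    qed
    have pr2: "(\<Prod>i\<in>insert m I. a i ^ (l(m:=p)) i) = a m ^ p * (\<Prod>i\<in>I. a i ^ l i)"
    proof -
      have "(\<Prod>i\<in>I. a i ^ (l(m:=p)) i) = (\<Prod>i\<in>I. a i ^ l i)" using insert.hyps(2) by (intro prod.cong) auto
      then show ?thesis using insert.hyps by simp
    qed
    have c: "real (k choose p) * (fact (k - p) / (\<Prod>i\<in>I. fact (l i))) = fact k / (fact p * (\<Prod>i\<in>I. fact (l i)))"
      using p by (simp add: binomial_fact field_simps)
    show "fps_const (fact k / (\<Prod>i\<in>insert m I. fact (((\<lambda>(p, l). l(m := p)) b) i))) *
            (\<Prod>i\<in>insert m I. a i ^ ((\<lambda>(p, l). l(m := p)) b) i) =
          (case b of (p, l) \<Rightarrow> of_nat (k choose p) * a m ^ p *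
            (fps_const (fact (k - p) / (\<Prod>i\<in>I. fact (l i))) * (\<Prod>i\<in>I. a i ^ l i)))"
      unfolding bpl split pr1 pr2 c[symmetric]
      by (simp add: fps_of_nat[symmetric] fps_const_mult[symmetric] algebra_simps)
  next
    fix l assume l: "l \<in> LL (insert m I) k"
    then have lP: "l \<in> PiE (insert m I) (\<lambda>_. {..k})" and ls: "sum l (insert m I) = k" unfolding LL_def by auto
    show "(\<lambda>(p, l). l(m := p)) ((\<lambda>l. (l m, l(m := undefined))) l) = l" by simp
    have s: "sum (l(m := undefined)) I = sum l I" using insert.hyps by (intro sum.cong) auto
    have sI: "sum l I = k - l m" using ls insert.hyps by simp
    have le: "l i \<le> k - l m" if "i \<in> I" for i
      using member_le_sum[of i I l] that insert.hyps sI by auto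
    show "(\<lambda>l. (l m, l(m := undefined))) l \<in> Sigma {..k} (\<lambda>p. LL I (k - p))"
      using lP le s sI insert.hyps unfolding LL_def by (auto simp: PiE_def Pi_def extensional_def)
  qed
  finally show ?case .
qed



lemma trunc_pow:
  fixes f g :: "real fps"
  assumes f0: "f $ 0 = 0" and g0: "g $ 0 = 0" and fg: "\<And>i. i \<le> m \<Longrightarrow> f $ i = g $ i"
  shows "j \<le> m + k - 1 \<Longrightarrow> (f ^ k) $ j = (g ^ k) $ j"
proof (induction k arbitrary: j)
  case 0 then show ?case by simp
next
  case (Suc k)
  have "(f ^ Suc k) $ j = (\<Sum>i=0..j. f $ i * (f ^ k) $ (j - i))" by (simp add: fps_mult_nth)
  also have "\<dots> = (\<Sum>i=0..j. g $ i * (g ^ k) $ (j - i))"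
  proof (rule sum.cong)
    fix i assume i: "i \<in> {0..j}"
    show "f $ i * (f ^ k) $ (j - i) = g $ i * (g ^ k) $ (j - i)"
    proof (cases "i = 0")
      case True then show ?thesis using f0 g0 by simp
    next
      case False
      show ?thesis
      proof (cases "i \<le> m")
        case True
        have "j - i \<le> m + k - 1" using Suc.prems False True i by auto
        then show ?thesis using Suc.IH fg[OF True] by simp
      next
        case False
        then have "j - i < k" using Suc.prems i by auto
        then show ?thesis using startsby_zero_power_prefix[OF f0] startsby_zero_power_prefix[OF g0] by simp
      qed
    qed
  qed simp
  also have "\<dots> = (g ^ Suc k) $ j" by (simp add: fps_mult_nth)
  finally show ?case .
qed

lemma prod_monom_pow:
  fixes c :: "nat \<Rightarrow> real"
  assumes "finite I"
  shows "(\<Prod>i\<in>I. (fps_const (c i) * fps_X ^ i) ^ l i) = fps_const (\<Prod>i\<in>I. c i ^ l i) * fps_X ^ (\<Sum>i\<in>I. i * l i)"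
  using assms
proof (induction I rule: finite_induct)
  case empty then show ?case by simp
next
  case (insert m I)
  have h1: "(fps_const (c m) * fps_X ^ m) ^ l m = fps_const (c m ^ l m) * fps_X ^ (m * l m)"
    by (simp add: power_mult_distrib power_mult fps_const_power)
  have "(\<Prod>i\<in>insert m I. (fps_const (c i) * fps_X ^ i) ^ l i)
      = (fps_const (c m ^ l m) * fps_X ^ (m * l m)) * (fps_const (\<Prod>i\<in>I. c i ^ l i) * fps_X ^ (\<Sum>i\<in>I. i * l i))"
    by (subst prod.insert[OF insert.hyps]) (simp only: h1 insert.IH)
  also have "\<dots> = (fps_const (c m ^ l m) * fps_const (\<Prod>i\<in>I. c i ^ l i)) * (fps_X ^ (m * l m) * fps_X ^ (\<Sum>i\<in>I. i * l i))"
    by (simp only: mult_ac)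
  also have "\<dots> = fps_const (\<Prod>i\<in>insert m I. c i ^ l i) * fps_X ^ (\<Sum>i\<in>insert m I. i * l i)"
    by (subst prod.insert[OF insert.hyps], subst sum.insert[OF insert.hyps]) (simp only: fps_const_mult power_add)
  finally show ?case .
qed

lemma bell_fps:
  fixes x :: "nat \<Rightarrow> real"
  assumes kN: "k \<le> N"
  defines "XX \<equiv> Abs_fps (\<lambda>i. if i = 0 then 0 else x i / fact i)"
  shows "bell_partial N k x = fact N / fact k * (XX ^ k) $ N"
proof -
  define I where "I = {1..N - k + 1}"
  define c where "c i = x i / fact i" for i
  define a where "a i = fps_const (c i) * fps_X ^ i" for i
  define T where "T = (\<Sum>i\<in>I. a i)"
  have finI: "finite I" by (simp add: I_def)
  have Tn: "T $ j = (if j \<in> I then c j else 0)" for j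
  proof -
    have "T $ j = (\<Sum>i\<in>I. if j = i then c i else 0)"
      unfolding T_def a_def fps_sum_nth by (intro sum.cong) (auto simp: fps_X_power_nth)
    also have "\<dots> = (if j \<in> I then c j else 0)" using finI by (simp add: sum.delta)
    finally show ?thesis .
  qed
  have "(XX ^ k) $ N = (T ^ k) $ N"
  proof (rule trunc_pow[where m = "N - k + 1"])
    show "XX $ 0 = 0" by (simp add: XX_def)
    show "T $ 0 = 0" by (simp add: Tn I_def)
    show "XX $ i = T $ i" if "i \<le> N - k + 1" for i
      using that by (simp add: XX_def Tn I_def c_def)
    show "N \<le> N - k + 1 + k - 1" using kN by simp
  qed
  also have "T ^ k = (\<Sum>l\<in>LL I k. fps_const (fact k / (\<Prod>i\<in>I. fact (l i))) * (\<Prod>i\<in>I. a i ^ l i))"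
    unfolding T_def by (rule multinomial_fps[OF finI])
  also have "\<dots> = (\<Sum>l\<in>LL I k. fps_const (fact k / (\<Prod>i\<in>I. fact (l i)) * (\<Prod>i\<in>I. c i ^ l i)) * fps_X ^ (\<Sum>i\<in>I. i * l i))"
    unfolding a_def prod_monom_pow[OF finI] by (simp only: mult.assoc[symmetric] fps_const_mult)
  finally have e0: "(XX ^ k) $ N = (\<Sum>l\<in>LL I k. fps_const (fact k / (\<Prod>i\<in>I. fact (l i)) * (\<Prod>i\<in>I. c i ^ l i)) * fps_X ^ (\<Sum>i\<in>I. i * l i)) $ N" .
  also have "\<dots> = (\<Sum>l\<in>LL I k. if (\<Sum>i\<in>I. i * l i) = N then fact k / (\<Prod>i\<in>I. fact (l i)) * (\<Prod>i\<in>I. c i ^ l i) else 0)"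
    unfolding fps_sum_nth fps_mult_left_const_nth fps_X_power_nth by (intro sum.cong) auto
  also have "\<dots> = (\<Sum>l\<in>{l\<in>LL I k. (\<Sum>i\<in>I. i * l i) = N}. fact k / (\<Prod>i\<in>I. fact (l i)) * (\<Prod>i\<in>I. c i ^ l i))"
    by (rule sum.inter_filter[symmetric]) (rule finite_LL[OF finI])
  also have "{l\<in>LL I k. (\<Sum>i\<in>I. i * l i) = N} = {l \<in> PiE I (\<lambda>_. {..N}). (\<Sum>i\<in>I. i * l i) = N \<and> (\<Sum>i\<in>I. l i) = k}"
  proof (intro set_eqI iffI)
    fix l assume "l \<in> {l\<in>LL I k. (\<Sum>i\<in>I. i * l i) = N}"
    then show "l \<in> {l \<in> PiE I (\<lambda>_. {..N}). (\<Sum>i\<in>I. i * l i) = N \<and> (\<Sum>i\<in>I. l i) = k}"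
      using kN unfolding LL_def by (auto simp: PiE_def Pi_def)
  next
    fix l assume l: "l \<in> {l \<in> PiE I (\<lambda>_. {..N}). (\<Sum>i\<in>I. i * l i) = N \<and> (\<Sum>i\<in>I. l i) = k}"
    have "l i \<le> k" if "i \<in> I" for i using member_le_sum[of i I l] that finI l by auto
    then show "l \<in> {l\<in>LL I k. (\<Sum>i\<in>I. i * l i) = N}"
      using l unfolding LL_def by (auto simp: PiE_def Pi_def)
  qed
  finally have e: "(XX ^ k) $ N = (\<Sum>l \<in> {l \<in> PiE I (\<lambda>_. {..N}). (\<Sum>i\<in>I. i * l i) = N \<and> (\<Sum>i\<in>I. l i) = k}.
      fact k / (\<Prod>i\<in>I. fact (l i)) * (\<Prod>i\<in>I. c i ^ l i))" .
  show ?thesis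
    unfolding bell_partial_def e I_def[symmetric] c_def[symmetric] sum_distrib_left
    by (rule sum.cong) (auto simp: field_simps)
qed



definition xfun :: "nat \<Rightarrow> real" where
  "xfun i = (1 + (-1) ^ i) / 2 * (real (dfact (i - 1)))\<^sup>2 / real (i + 1)"

definition XX :: "real fps" where
  "XX = Abs_fps (\<lambda>i. if i = 0 then 0 else xfun i / fact i)"

lemma X_XX: "fps_X * XX = YY - fps_X"
proof (rule fps_ext)
  fix j
  have "j = 0 \<or> j = 1 \<or> (\<exists>i. j = Suc i \<and> i \<ge> 1)" by (cases j) auto
  then consider "j = 0" | "j = 1" | i where "j = Suc i" "i \<ge> 1" by blast
  then show "(fps_X * XX) $ j = (YY - fps_X) $ j"
  proof cases
    case 1 then show ?thesis by (simp add: YY_nth yy_def)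
  next
    case 2 then show ?thesis by (simp add: YY_nth yy_def XX_def fps_X_nth)
  next
    case 3
    have lhs: "(fps_X * XX) $ j = xfun i / fact i" using 3 by (simp add: XX_def)
    have rhs: "(YY - fps_X) $ j = yy (Suc i) / fact (Suc i)" using 3 by (simp add: YY_nth fps_X_nth)
    show ?thesis unfolding lhs rhs
    proof (cases "even i")
      case True
      have "yy (Suc i) = (real (dfact (i - 1)))\<^sup>2" using True 3 by (simp add: yy_def)
      then show "xfun i / fact i = yy (Suc i) / fact (Suc i)"
        using True unfolding xfun_def by (simp add: fact_Suc field_simps del: of_nat_Suc)
    next
      case False
      then show "xfun i / fact i = yy (Suc i) / fact (Suc i)" unfolding xfun_def yy_def by simp
    qed
  qed
qed

lemma XX_pow: "(XX ^ k) $ N = ((YY - fps_X) ^ k) $ (N + k)"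
proof -
  have "(YY - fps_X) ^ k = fps_X ^ k * XX ^ k" unfolding X_XX[symmetric] by (simp add: power_mult_distrib)
  then show ?thesis by (simp add: fps_X_power_mult_nth)
qed

lemma neg_pow_nth: "((-1::real fps)^m * G) $ n = (-1)^m * G $ n"
  by (induction m arbitrary: G) (simp_all add: mult.assoc)

lemma binom_YY: "((YY - fps_X) ^ k) $ (N + k) = (\<Sum>q\<le>k. real (k choose q) * (-1)^(k - q) * (YY ^ q) $ (N + q))"
proof -
  have "(YY - fps_X) ^ k = (YY + (- fps_X)) ^ k" by simp
  also have "\<dots> = (\<Sum>q\<le>k. of_nat (k choose q) * YY ^ q * (- fps_X) ^ (k - q))" by (rule binomial_ring)
  finally have e: "((YY - fps_X) ^ k) $ (N + k) = (\<Sum>q\<le>k. (of_nat (k choose q) * YY ^ q * (- fps_X) ^ (k - q)) $ (N + k))"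
    by (simp only: fps_sum_nth)
  show ?thesis unfolding e
  proof (rule sum.cong)
    fix q assume q: "q \<in> {..k}"
    have eq: "of_nat (k choose q) * YY ^ q * (- fps_X) ^ (k - q) = (-1)^(k - q) * (fps_const (real (k choose q)) * (YY ^ q * fps_X ^ (k - q)))"
      by (simp only: power_minus[of "fps_X :: real fps"] fps_of_nat mult_ac)
    have nq: "N + k - (k - q) = N + q" "\<not> N + k < k - q" using q by auto
    show "(of_nat (k choose q) * YY ^ q * (- fps_X) ^ (k - q)) $ (N + k) = real (k choose q) * (-1)^(k - q) * (YY ^ q) $ (N + q)"
      unfolding eq neg_pow_nth fps_mult_left_const_nth fps_X_power_mult_right_nth nq using q by (auto simp: mult_ac)
  qed simp
qed

lemma YY_pow_nth:
  assumes "q \<ge> 1"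
  shows "(YY ^ q) $ (2 * n + q) = fact q / fact (2 * n + q) * ((-4)^n * Qfun q (2 * n) 2)"
proof -
  have "cc (2*n+q) q = (-4)^n * Qfun q (2 * n) 2"
    using main_cc[OF assms, of n] Qfun_RR[OF assms, of n] by (simp add: add.commute)
  then show ?thesis unfolding cc_def by (simp add: field_simps)
qed



lemma sign_aux: "q \<le> k \<Longrightarrow> (-1::real)^(n+k) * (-1)^q = (-1)^n * (-1)^(k-q)"
proof -
  assume q: "q \<le> k"
  then have "k = (k - q) + q" by simp
  then have "(-1::real)^(n+k) * (-1)^q = (-1)^n * (-1)^(k-q) * ((-1)^q * (-1)^q)"
    by (metis (no_types) power_add mult.assoc)
  also have "(-1::real)^q * (-1)^q = 1" by (simp flip: power_add)
  finally show ?thesis by simp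
qed

lemma term_eq:
  assumes q: "1 \<le> q" "q \<le> k"
  shows "fact (2*n) / fact k * (real (k choose q) * (-1)^(k - q) * (fact q / fact (2*n+q) * ((-4)^n * Q)))
       = (-1)^(n+k) * (2^(2*n) * fact (2*n)) / fact (2*n+k) * ((-1)^q * real ((2*n+k) choose (k - q)) * Q)"
proof -
  have b1: "real (k choose q) = fact k / (fact q * fact (k - q))" using q by (simp add: binomial_fact)
  have e: "2*n+k - (k-q) = 2*n+q" using q by simp
  have b2: "real ((2*n+k) choose (k - q)) = fact (2*n+k) / (fact (k-q) * fact (2*n+q))"
    using q by (subst binomial_fact) (auto simp: e)
  have s: "(-1::real)^(n+k) * ((-1)^q * X) = (-1)^n * (-1)^(k-q) * X" for X
    using sign_aux[OF q(2), of n] by (simp add: mult.assoc[symmetric])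
  have p: "(-4::real)^n = (-1)^n * 2^(2*n)" by (simp add: power_mult power_mult_distrib[symmetric])
  have s2: "(-1::real)^q * (-1)^(k+n) = (-1)^n * (-1)^(k-q)"
    using sign_aux[OF q(2), of n] by (simp add: add.commute mult.commute)
  show ?thesis unfolding b1 b2 p
    using s2 by (simp add: field_simps)
qed

theorem theorem3p1:
  fixes k n :: nat
  assumes "k \<ge> 1" and "n \<ge> 1" and "2 * n \<ge> k"
  shows "bell_partial (2 * n) k
           (\<lambda>i. (1 + (-1) ^ i) / 2 * (real (dfact (i - 1)))\<^sup>2 / real (i + 1))
         = (-1) ^ (n + k) * real (dfact (4 * n)) / fact (2 * n + k)
           * (\<Sum>q=1..k. (-1) ^ q * real ((2 * n + k) choose (k - q)) * Qfun q (2 * n) 2)"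
proof -
  have xf: "(\<lambda>i. (1 + (-1) ^ i) / 2 * (real (dfact (i - 1)))\<^sup>2 / real (i + 1)) = xfun"
    by (rule ext) (simp add: xfun_def)
  have XXd: "Abs_fps (\<lambda>i. if i = 0 then 0 else xfun i / fact i) = XX" by (simp add: XX_def)
  have "bell_partial (2 * n) k xfun = fact (2*n) / fact k * (XX ^ k) $ (2*n)"
    using bell_fps[OF assms(3), of xfun] unfolding XXd .
  also have "(XX ^ k) $ (2*n) = (\<Sum>q\<le>k. real (k choose q) * (-1)^(k - q) * (YY ^ q) $ (2*n + q))"
    unfolding XX_pow binom_YY ..
  also have "\<dots> = (\<Sum>q=1..k. real (k choose q) * (-1)^(k - q) * (fact q / fact (2*n+q) * ((-4)^n * Qfun q (2 * n) 2)))"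
  proof -
    have "{..k} = insert 0 {1..k}" by auto
    moreover have "(YY ^ 0) $ (2*n + 0) = 0" using assms(2) by simp
    ultimately have "(\<Sum>q\<le>k. real (k choose q) * (-1)^(k - q) * (YY ^ q) $ (2*n + q))
        = (\<Sum>q=1..k. real (k choose q) * (-1)^(k - q) * (YY ^ q) $ (2*n + q))" by simp
    also have "\<dots> = (\<Sum>q=1..k. real (k choose q) * (-1)^(k - q) * (fact q / fact (2*n+q) * ((-4)^n * Qfun q (2 * n) 2)))"
      by (rule sum.cong) (auto simp: YY_pow_nth)
    finally show ?thesis .
  qed
  finally have L: "bell_partial (2 * n) k xfun = fact (2*n) / fact k * \<dots>" .
  have d: "real (dfact (4 * n)) = 2^(2*n) * fact (2*n)"
    using dfact_even[of "2*n"] by (simp add: mult.assoc)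
  show ?thesis unfolding xf L d sum_distrib_left
    by (rule sum.cong[OF refl], rule term_eq) auto
qed


end
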